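(* Let $(P,\cdot)$ be a strong order-preserving partial action of a monoid $T$ on a poset $P$. Then there is a globalisation $(\iota,\mathbf{P},\diamond)$ of $(P,\cdot)$ such that $\mathbf{P}$ is a poset, $\iota:P\to\mathbf{P}$ is an order-embedding whose image $P\iota$ is an order ideal of $\mathbf{P}$, and $(\mathbf{P},\diamond)$ is an order-preserving (total) action of $T$.
   Context: A partial action of a monoid $T$ on a set $X$ is a partial map $T\times X\to X$, $(t,x)\mapsto t\cdot x$, such that $1\cdot x$ is defined and equals $x$ for all $x$, and whenever $t\cdot x$ and $s\cdot(t\cdot x)$ are defined, $st\cdot x$ is defined and $s\cdot(t\cdot x)=st\cdot x$. It is an action if $t\cdot x$ is always defined. It is strong if whenever $t\cdot x$ and $st\cdot x$ are defined, $s\cdot(t\cdot x)$ is defined. A (partial) action on a poset is order-preserving if whenever $x\le y$ and $t\cdot y$ is defined, $t\cdot x$ is defined and $t\cdot x\le t\cdot y$. A globalisation of a partial action $(X,\cdot)$ of $T$ is a triple $(\iota,\mathbf{X},\ast)$ with $\iota:X\to\mathbf{X}$ injective and $(\mathbf{X},\ast)$ an action of $T$ such that for all $t\in T$, $x\in X$: $t\cdot x$ is defined iff $t\ast x\iota\in X\iota$, and in that case $(t\cdot x)\iota=t\ast x\iota$. An order ideal of a poset is a down-closed subset. *)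

theory Defs
  imports Main
begin

definition partial_action :: "'a set \<Rightarrow> ('m::monoid_mult \<Rightarrow> 'a \<Rightarrow> 'a option) \<Rightarrow> bool" where
  "partial_action X act \<longleftrightarrow>
     (\<forall>t x y. act t x = Some y \<longrightarrow> x \<in> X \<and> y \<in> X) \<and>
     (\<forall>x\<in>X. act 1 x = Some x) \<and>
     (\<forall>s t x y z. act t x = Some y \<longrightarrow> act s y = Some z \<longrightarrow> act (s * t) x = Some z)"

definition strong_partial_action :: "('m::monoid_mult \<Rightarrow> 'a \<Rightarrow> 'a option) \<Rightarrow> bool" where
  "strong_partial_action act \<longleftrightarrow>
     (\<forall>s t x y. act t x = Some y \<longrightarrow> act (s * t) x \<noteq> None \<longrightarrow> act s y \<noteq> None)"

definition order_preserving_partial_action ::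
    "'a rel \<Rightarrow> ('m \<Rightarrow> 'a \<Rightarrow> 'a option) \<Rightarrow> bool" where
  "order_preserving_partial_action le act \<longleftrightarrow>
     (\<forall>t x y y'. (x, y) \<in> le \<longrightarrow> act t y = Some y' \<longrightarrow>
        (\<exists>x'. act t x = Some x' \<and> (x', y') \<in> le))"

definition monoid_action :: "'b set \<Rightarrow> ('m::monoid_mult \<Rightarrow> 'b \<Rightarrow> 'b) \<Rightarrow> bool" where
  "monoid_action Y act \<longleftrightarrow>
     (\<forall>t. \<forall>y\<in>Y. act t y \<in> Y) \<and>
     (\<forall>y\<in>Y. act 1 y = y) \<and>
     (\<forall>s t. \<forall>y\<in>Y. act s (act t y) = act (s * t) y)"

definition order_preserving_action :: "'b set \<Rightarrow> 'b rel \<Rightarrow> ('m \<Rightarrow> 'b \<Rightarrow> 'b) \<Rightarrow> bool" where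
  "order_preserving_action Y le act \<longleftrightarrow>
     (\<forall>t. \<forall>x\<in>Y. \<forall>y\<in>Y. (x, y) \<in> le \<longrightarrow> (act t x, act t y) \<in> le)"

definition globalisation ::
    "'a set \<Rightarrow> ('m::monoid_mult \<Rightarrow> 'a \<Rightarrow> 'a option) \<Rightarrow> ('a \<Rightarrow> 'b) \<Rightarrow> 'b set \<Rightarrow> ('m \<Rightarrow> 'b \<Rightarrow> 'b) \<Rightarrow> bool" where
  "globalisation X act iota Y star \<longleftrightarrow>
     inj_on iota X \<and> iota ` X \<subseteq> Y \<and> monoid_action Y star \<and>
     (\<forall>t. \<forall>x\<in>X. (act t x \<noteq> None \<longleftrightarrow> star t (iota x) \<in> iota ` X) \<and>
                  (act t x \<noteq> None \<longrightarrow> iota (the (act t x)) = star t (iota x)))"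

definition order_embedding :: "'a set \<Rightarrow> 'a rel \<Rightarrow> 'b rel \<Rightarrow> ('a \<Rightarrow> 'b) \<Rightarrow> bool" where
  "order_embedding X le le' f \<longleftrightarrow>
     (\<forall>x\<in>X. \<forall>y\<in>X. (x, y) \<in> le \<longleftrightarrow> (f x, f y) \<in> le')"

definition order_ideal :: "'b set \<Rightarrow> 'b rel \<Rightarrow> 'b set \<Rightarrow> bool" where
  "order_ideal Y le I \<longleftrightarrow> I \<subseteq> Y \<and> (\<forall>y\<in>Y. \<forall>z\<in>I. (y, z) \<in> le \<longrightarrow> y \<in> I)"

end

theory Submission
  imports Defs
begin

theorem mainTheorem4:
  fixes X :: "'a set" and le :: "'a rel" and act :: "'m::monoid_mult \<Rightarrow> 'a \<Rightarrow> 'a option"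
  assumes "partial_order_on X le"
    and "partial_action X act"
    and "strong_partial_action act"
    and "order_preserving_partial_action le act"
  shows "\<exists>(iota :: 'a \<Rightarrow> ('m \<times> 'a) set) (Y :: ('m \<times> 'a) set set) leY star.
           globalisation X act iota Y star \<and>
           partial_order_on Y leY \<and>
           order_embedding X le leY iota \<and>
           order_ideal Y leY (iota ` X) \<and>
           order_preserving_action Y leY star"
proof -
  have po: "refl_on X le" "trans le" "antisym le" "le \<subseteq> X \<times> X"
    using partial_order_onD[OF assms(1)] by auto
  have pa1: "\<And>t x y. act t x = Some y \<Longrightarrow> x \<in> X \<and> y \<in> X"
    and pa2: "\<And>x. x \<in> X \<Longrightarrow> act 1 x = Some x"
    and pa3: "\<And>s t x y z. act t x = Some y \<Longrightarrow> act s y = Some z \<Longrightarrow> act (s * t) x = Some z"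
    using assms(2) unfolding partial_action_def by blast+
  have st: "\<And>s t x y. act t x = Some y \<Longrightarrow> act (s * t) x \<noteq> None \<Longrightarrow> act s y \<noteq> None"
    using assms(3) unfolding strong_partial_action_def by blast
  have op: "\<And>t x y y'. (x, y) \<in> le \<Longrightarrow> act t y = Some y' \<Longrightarrow> (\<exists>x'. act t x = Some x' \<and> (x', y') \<in> le)"
    using assms(4) unfolding order_preserving_partial_action_def by blast
  define g where "g t x = {(u,y). act (u*t) x = Some y}" for t x
  define iota where "iota x = g 1 x" for x
  define star where "star t S = {(u,y). (u*t, y) \<in> S}" for t and S :: "('m \<times> 'a) set"
  define Y where "Y = {g t x | t x. x \<in> X}"
  define leY where "leY = {(S,S'). S\<in>Y \<and> S'\<in>Y \<and> (\<forall>u y'. (u,y')\<in>S' \<longrightarrow> (\<exists>x'. (u,x')\<in>S \<and> (x',y')\<in>le))}"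
  have starg: "star s (g t x) = g (s*t) x" for s t x
    unfolding star_def g_def by (simp add: mult.assoc)
  have iota1: "(u,y) \<in> iota x \<longleftrightarrow> act u x = Some y" for u y x
    unfolding iota_def g_def by simp
  have gsome: "act t x = Some y \<Longrightarrow> g t x = iota y" for t x y
  proof -
    assume h: "act t x = Some y"
    show ?thesis
    proof (rule set_eqI, clarify)
      fix u z
      show "((u,z) \<in> g t x) = ((u,z) \<in> iota y)"
      proof
        assume "(u,z) \<in> g t x"
        then have a: "act (u*t) x = Some z" unfolding g_def by simp
        then obtain w where w: "act u y = Some w" using st[OF h] by fastforce
        then have "act (u*t) x = Some w" using pa3[OF h] by blast
        with a w show "(u,z) \<in> iota y" using iota1 by simp
      next
        assume "(u,z) \<in> iota y"
        then have "act u y = Some z" using iota1 by simp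
        then show "(u,z) \<in> g t x" using pa3[OF h] unfolding g_def by simp
      qed
    qed
  qed
  have gfun: "(u,a) \<in> g t x \<Longrightarrow> (u,b) \<in> g t x \<Longrightarrow> a = b" for u a b t x
    unfolding g_def by simp
  have gX: "(u,a) \<in> g t x \<Longrightarrow> a \<in> X" for u a t x
    unfolding g_def using pa1 by auto
  have iotaY: "iota x \<in> Y" if "x \<in> X" for x
    using that unfolding Y_def iota_def by blast
  have glob: "globalisation X act iota Y star"
    unfolding globalisation_def
  proof (intro conjI allI ballI)
    show "inj_on iota X"
    proof (rule inj_onI)
      fix x y assume "x \<in> X" "y \<in> X" "iota x = iota y"
      then have "(1,x) \<in> iota y" using iota1 pa2 by (metis mult_1)
      then show "x = y" using iota1 pa2 \<open>y \<in> X\<close> by simp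
    qed
    show "iota ` X \<subseteq> Y" using iotaY by blast
    show "monoid_action Y star"
      unfolding monoid_action_def
    proof (intro conjI allI ballI)
      fix t S assume "S \<in> Y"
      then obtain s x where "S = g s x" "x \<in> X" unfolding Y_def by blast
      then show "star t S \<in> Y" using starg unfolding Y_def by blast
    next
      fix S show "star 1 S = S" unfolding star_def by simp
    next
      fix s t S show "star s (star t S) = star (s * t) S" unfolding star_def by (simp add: mult.assoc)
    qed
    fix t x assume x: "x \<in> X"
    show "(act t x \<noteq> None) = (star t (iota x) \<in> iota ` X)"
    proof
      assume "act t x \<noteq> None"
      then obtain y where y: "act t x = Some y" by blast
      then have "star t (iota x) = iota y" using starg[of t 1 x] gsome[OF y] unfolding iota_def[of x] by simp
      then show "star t (iota x) \<in> iota ` X" using pa1[OF y] by blast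
    next
      assume "star t (iota x) \<in> iota ` X"
      then obtain y where y: "y \<in> X" "star t (iota x) = iota y" by blast
      then have "(1,y) \<in> star t (iota x)" using iota1 pa2 by simp
      then show "act t x \<noteq> None" unfolding star_def iota1 by simp
    qed
    show "act t x \<noteq> None \<longrightarrow> iota (the (act t x)) = star t (iota x)"
    proof
      assume "act t x \<noteq> None"
      then obtain y where y: "act t x = Some y" by blast
      then have "star t (iota x) = iota y" using starg[of t 1 x] gsome[OF y] unfolding iota_def[of x] by simp
      then show "iota (the (act t x)) = star t (iota x)" using y by simp
    qed
  qed
  have po2: "partial_order_on Y leY"
    unfolding partial_order_on_def preorder_on_def
  proof (intro conjI)
    show "leY \<subseteq> Y \<times> Y" unfolding leY_def by auto
    show "refl_on Y leY" unfolding refl_on_def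
    proof
      fix S assume S: "S \<in> Y"
      then obtain t x where Sg: "S = g t x" unfolding Y_def by blast
      have "\<forall>u y'. (u,y')\<in>S \<longrightarrow> (\<exists>x'. (u,x')\<in>S \<and> (x',y')\<in>le)"
      proof (intro allI impI)
        fix u y' assume "(u,y') \<in> S"
        moreover then have "(y',y') \<in> le" using gX Sg po(1) unfolding refl_on_def by blast
        ultimately show "\<exists>x'. (u,x')\<in>S \<and> (x',y')\<in>le" by blast
      qed
      then show "(S,S) \<in> leY" unfolding leY_def using S by blast
    qed
    show "trans leY" unfolding trans_def
    proof (intro allI impI)
      fix A B C assume ab: "(A,B) \<in> leY" and bc: "(B,C) \<in> leY"
      have "\<forall>u y'. (u,y')\<in>C \<longrightarrow> (\<exists>x'. (u,x')\<in>A \<and> (x',y')\<in>le)"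
      proof (intro allI impI)
        fix u y' assume "(u,y') \<in> C"
        then obtain b where b: "(u,b) \<in> B" "(b,y') \<in> le" using bc unfolding leY_def by blast
        then obtain a where a: "(u,a) \<in> A" "(a,b) \<in> le" using ab unfolding leY_def by blast
        have "(a,y') \<in> le" using po(2) a(2) b(2) unfolding trans_def by blast
        then show "\<exists>x'. (u,x')\<in>A \<and> (x',y')\<in>le" using a by blast
      qed
      then show "(A,C) \<in> leY" using ab bc unfolding leY_def by blast
    qed
    show "antisym leY"
    proof (rule antisymI)
      fix S S' assume h: "(S,S') \<in> leY" "(S',S) \<in> leY"
      then obtain t x t' x' where S: "S = g t x" and S': "S' = g t' x'"
        unfolding leY_def Y_def by blast
      show "S = S'"
      proof (rule set_eqI, clarify)
        fix u z
        show "((u,z) \<in> S) = ((u,z) \<in> S')"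
        proof
          assume a: "(u,z) \<in> S"
          then obtain w where w: "(u,w) \<in> S'" "(w,z) \<in> le" using h(2) unfolding leY_def by blast
          then obtain v where v: "(u,v) \<in> S" "(v,w) \<in> le" using h(1) unfolding leY_def by blast
          have "v = z" using gfun a v(1) S by blast
          then have "w = z" using po(3) w(2) v(2) unfolding antisym_def by blast
          then show "(u,z) \<in> S'" using w by simp
        next
          assume a: "(u,z) \<in> S'"
          then obtain w where w: "(u,w) \<in> S" "(w,z) \<in> le" using h(1) unfolding leY_def by blast
          then obtain v where v: "(u,v) \<in> S'" "(v,w) \<in> le" using h(2) unfolding leY_def by blast
          have "v = z" using gfun a v(1) S' by blast
          then have "w = z" using po(3) w(2) v(2) unfolding antisym_def by blast
          then show "(u,z) \<in> S" using w by simp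
        qed
      qed
    qed
  qed
  have emb: "order_embedding X le leY iota"
    unfolding order_embedding_def
  proof (intro ballI iffI)
    fix x y assume x: "x \<in> X" and y: "y \<in> X"
    { assume "(x,y) \<in> le"
      then have "\<forall>u y'. (u,y')\<in>iota y \<longrightarrow> (\<exists>x'. (u,x')\<in>iota x \<and> (x',y')\<in>le)"
        using op unfolding iota1 by blast
      then show "(iota x, iota y) \<in> leY" unfolding leY_def using iotaY x y by blast }
    { assume "(iota x, iota y) \<in> leY"
      moreover have "(1,y) \<in> iota y" using iota1 pa2 y by simp
      ultimately obtain x' where "(1,x') \<in> iota x" "(x',y) \<in> le" unfolding leY_def by blast
      then show "(x,y) \<in> le" using iota1 pa2 x by simp }
  qed
  have ideal: "order_ideal Y leY (iota ` X)"
    unfolding order_ideal_def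
  proof (intro conjI ballI impI)
    show "iota ` X \<subseteq> Y" using iotaY by blast
    fix S Z assume S: "S \<in> Y" and Z: "Z \<in> iota ` X" and h: "(S, Z) \<in> leY"
    then obtain z where z: "z \<in> X" "Z = iota z" by blast
    obtain t x where Sg: "S = g t x" using S unfolding Y_def by blast
    have "(1,z) \<in> Z" using z iota1 pa2 by simp
    then obtain x' where "(1,x') \<in> S" using h unfolding leY_def by blast
    then have a: "act t x = Some x'" using Sg unfolding g_def by simp
    then show "S \<in> iota ` X" using gsome[OF a] Sg pa1[OF a] by blast
  qed
  have closed: "star t S \<in> Y" if SY: "S \<in> Y" for t S
  proof -
    obtain s x where "S = g s x" "x \<in> X" using SY unfolding Y_def by blast
    then show ?thesis using starg unfolding Y_def by blast
  qed
  have opa: "order_preserving_action Y leY star"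
    unfolding order_preserving_action_def
  proof (intro allI ballI impI)
    fix t S S' assume S: "S \<in> Y" and S': "S' \<in> Y" and h: "(S,S') \<in> leY"
    have "\<forall>u y'. (u,y')\<in>star t S' \<longrightarrow> (\<exists>x'. (u,x')\<in>star t S \<and> (x',y')\<in>le)"
    proof (intro allI impI)
      fix u y' assume "(u,y') \<in> star t S'"
      then have "(u*t,y') \<in> S'" unfolding star_def by simp
      then obtain x' where "(u*t,x') \<in> S" "(x',y') \<in> le" using h unfolding leY_def by blast
      then show "\<exists>x'. (u,x')\<in>star t S \<and> (x',y')\<in>le" unfolding star_def by blast
    qed
    then show "(star t S, star t S') \<in> leY"
      unfolding leY_def using closed S S' by blast
  qed
  show ?thesis
    apply (rule exI[of _ iota], rule exI[of _ Y], rule exI[of _ leY], rule exI[of _ star])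
    using glob po2 emb ideal opa by (intro conjI)
qed

end
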